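(* Let $p$ be an odd prime and $r$ a positive integer. Then $$ \sum_{k=0}^{(p^r+1)/2}\frac{(4k-1)^3}{256^k(2k-1)^4}\binom{2k}{k}^4\equiv 3p^{4r} \pmod{p^{4r+1}}, \qquad \sum_{k=0}^{p^r-1}\frac{(4k-1)^3}{256^k(2k-1)^4}\binom{2k}{k}^4\equiv 3p^{4r} \pmod{p^{4r+1}}. $$
   Context: Congruences between rational numbers modulo a power of $p$ are understood in the ring of $p$-adic integers (i.e. the difference has $p$-adic valuation at least the exponent indicated). *)

theory Defs
  imports Complex_Main "HOL-Computational_Algebra.Primes"
begin

text \<open>Congruence of rationals modulo p^e in the ring of p-adic integers:
  the difference a - b equals p^e * (u/v) with v not divisible by p,
  i.e. the p-adic valuation of a - b is at least e.\<close>
definition padic_cong :: "rat \<Rightarrow> rat \<Rightarrow> nat \<Rightarrow> nat \<Rightarrow> bool" where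
  "padic_cong a b p e \<longleftrightarrow>
     (\<exists>u v :: int. \<not> int p dvd v \<and> a - b = of_int (int p ^ e) * (of_int u / of_int v))"

definition term3 :: "nat \<Rightarrow> rat" where
  "term3 k = (4 * of_nat k - 1) ^ 3 / (256 ^ k * (2 * of_nat k - 1) ^ 4) * of_nat (2 * k choose k) ^ 4"

end

theory Submission imports Defs "HOL-Number_Theory.Number_Theory" begin

lemma central_rec: "(Suc N) * (2*Suc N choose Suc N) = 2*(2*N+1) * (2*N choose N)"
proof -
  have 1: "Suc N * (Suc (Suc (2*N)) choose Suc N) = Suc (Suc (2*N)) * (Suc (2*N) choose N)"
    by (rule Suc_times_binomial)
  have 2: "Suc N * (Suc (2*N) choose Suc N) = Suc (2*N) * (2*N choose N)"
    by (rule Suc_times_binomial)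
  have "(Suc (2*N) choose N) = (Suc (2*N) choose (Suc (2*N) - N))"
    by (rule binomial_symmetric) simp
  also have "Suc (2*N) - N = Suc N" by simp
  finally have 3: "(Suc (2*N) choose N) = (Suc (2*N) choose Suc N)" .
  have e: "2*Suc N = Suc (Suc (2*N))" by simp
  have "Suc N * (Suc N * (2*Suc N choose Suc N)) = Suc N * (Suc (Suc (2*N)) * (Suc (2*N) choose Suc N))"
    unfolding e 1 3 ..
  also have "\<dots> = Suc (Suc (2*N)) * (Suc N * (Suc (2*N) choose Suc N))" by (simp only: mult.left_commute)
  also have "\<dots> = Suc (Suc (2*N)) * (Suc (2*N) * (2*N choose N))" unfolding 2 ..
  also have "\<dots> = Suc N * (2*(2*N+1) * (2*N choose N))" by simp
  finally show ?thesis by (simp only: mult_left_cancel nat.simps(3) mult_cancel_left) simp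
qed

lemma sum_term3: "(\<Sum>k=0..N. term3 k) = (8*of_nat N^2 + 4*of_nat N - 1) * of_nat (2*N choose N)^4 / 256^N"
proof (induction N)
  case 0
  then show ?case by (simp add: term3_def)
next
  case (Suc N)
  define C where "C = (of_nat (2*N choose N) :: rat)"
  define B where "B = (of_nat (2*Suc N choose Suc N) :: rat)"
  have e: "(of_nat (Suc N) :: rat) * B = of_nat (2*(2*N+1)) * C"
    unfolding C_def B_def of_nat_mult[symmetric] central_rec ..
  have c: "(of_nat (2*Suc N choose Suc N)::rat) = 2*(2*of_nat N+1) * C / (of_nat N + 1)"
  proof -
    have "(of_nat N + 1) * B = 2*(2*of_nat N+1) * C" using e by (simp add: algebra_simps)
    moreover have "(of_nat N + 1::rat) \<noteq> 0" by (metis of_nat_Suc of_nat_eq_0_iff nat.simps(3) add.commute)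
    ultimately show ?thesis unfolding B_def[symmetric] by (simp add: eq_divide_eq mult.commute)
  qed
  have t: "term3 (Suc N) = (4*of_nat N+3)^3 / (256^(Suc N) * (2*of_nat N + 1)^4) * (2*(2*of_nat N+1) * C / (of_nat N + 1))^4"
    unfolding term3_def c by (simp add: algebra_simps)
  define x where "x = (of_nat N :: rat)"
  define a where "a = (256::rat)^N"
  have a0: "a > 0" unfolding a_def by simp
  have x0: "x + 1 > 0" "2*x+1>0" unfolding x_def by (simp_all add: add_pos_nonneg)
  have poly: "(8*(x+1)^2+4*(x+1)-1) * (2*(2*x+1))^4 = 256*(8*x^2+4*x-1)*(x+1)^4 + 16*(4*x+3)^3"
    by (simp add: algebra_simps power2_eq_square power3_eq_cube power4_eq_xxxx)
  have p256: "(256::rat)^Suc N = 256*a" by (simp add: a_def)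
  have t': "term3 (Suc N) = 16*(4*x+3)^3 * C^4 / (256 * a * (x+1)^4)"
    unfolding t x_def[symmetric] p256 using x0 a0
    by (simp add: power_mult_distrib power_divide) (simp add: field_simps, simp add: algebra_simps power4_eq_xxxx)
  have rhs: "(8*of_nat (Suc N)^2 + 4*of_nat (Suc N) - 1) * of_nat (2*Suc N choose Suc N)^4 / 256^Suc N
     = (8*(x+1)^2+4*(x+1)-1) * (2*(2*x+1))^4 * C^4 / (256 * a * (x+1)^4)"
    unfolding c x_def[symmetric] p256 using x0 a0
    by (simp add: x_def power_mult_distrib power_divide) (simp add: field_simps)
  define Y where "Y = 8*x^2+4*x-1"
  have k: "256*Y*(x+1)^4*C^4/(256*a*(x+1)^4) = Y*C^4/a"
    using x0 a0 by simp
  have "(\<Sum>k=0..Suc N. term3 k) = Y*C^4/a + 16*(4*x+3)^3 * C^4 / (256 * a * (x+1)^4)"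
    unfolding sum.atLeast0_atMost_Suc Suc.IH t' C_def[symmetric] x_def[symmetric] a_def[symmetric] Y_def ..
  also have "\<dots> = (256*Y*(x+1)^4 + 16*(4*x+3)^3) * C^4 / (256 * a * (x+1)^4)"
    unfolding k[symmetric] by (simp add: add_divide_distrib distrib_right)
  also have "\<dots> = (8*of_nat (Suc N)^2 + 4*of_nat (Suc N) - 1) * of_nat (2*Suc N choose Suc N)^4 / 256^Suc N"
    unfolding rhs poly Y_def ..
  finally show ?case .
qed

lemma keydvd:
  fixes p k :: nat and X :: int
  assumes "prime p" "0 < k" "k < p^r" "int (p^r) dvd int k * X"
  shows "int p dvd X"
proof (rule ccontr)
  assume "\<not> int p dvd X"
  moreover have "prime (int p)" using assms(1) by simp
  ultimately have "coprime (int p) X" using prime_imp_coprime by blast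
  hence "coprime (int p ^ r) X" by simp
  hence "int p ^ r dvd int k" using assms(4) by (simp add: coprime_dvd_mult_left_iff)
  hence "p^r dvd k" by (metis of_nat_dvd_iff of_nat_power)
  hence "p^r \<le> k" using assms(2) by (simp add: dvd_imp_le)
  thus False using assms(3) by simp
qed

lemma binom_m1:
  fixes p r j :: nat
  assumes "prime p" "j \<le> p^r - 1"
  shows "int p dvd (int (p^r - 1 choose j) - (-1)^j)"
  using assms(2)
proof (induction j)
  case 0
  then show ?case by simp
next
  case (Suc j)
  define q where "q = p^r"
  have q0: "q > 0" using assms(1) unfolding q_def by (simp add: prime_gt_0_nat)
  have qs: "Suc (q - 1) = q" using q0 by simp
  have "Suc j * (Suc (q-1) choose Suc j) = Suc (q-1) * (q - 1 choose j)"
    by (rule Suc_times_binomial)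
  hence "Suc j * (q choose Suc j) = q * (q - 1 choose j)" unfolding qs .
  hence "int (p^r) dvd int (Suc j) * int (q choose Suc j)"
    unfolding q_def by (metis dvd_triv_left of_nat_mult)
  hence d: "int p dvd int (q choose Suc j)"
    using keydvd[OF assms(1), of "Suc j" r] Suc.prems q_def by fastforce
  have pas: "(q choose Suc j) = (q - 1 choose j) + (q - 1 choose Suc j)"
    using qs by (metis binomial_Suc_Suc)
  have ih: "int p dvd (int (q - 1 choose j) - (-1)^j)" using Suc q_def by simp
  have "int (q - 1 choose Suc j) - (-1)^Suc j = int (q choose Suc j) - (int (q - 1 choose j) - (-1)^j)"
    unfolding pas by simp
  also have "int p dvd \<dots>" using d ih by (rule dvd_diff)
  finally show ?case unfolding q_def .
qed

lemma binom_p1: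
  fixes p r j :: nat
  assumes "prime p" "j \<le> p^r - 1"
  shows "int p dvd (int (p^r + j choose j) - 1)"
  using assms(2)
proof (induction j)
  case 0
  then show ?case by simp
next
  case (Suc j)
  define q where "q = p^r"
  have q0: "q > 0" using assms(1) unfolding q_def by (simp add: prime_gt_0_nat)
  have "Suc j * (Suc (q+j) choose Suc j) = Suc (q+j) * (q + j choose j)"
    by (rule Suc_times_binomial)
  hence "int (Suc j) * int (q + Suc j choose Suc j) = (int q + int (Suc j)) * int (q + j choose j)"
    by (metis add_Suc_right of_nat_add of_nat_mult)
  hence "int (Suc j) * (int (q + Suc j choose Suc j) - int (q + j choose j)) = int q * int (q + j choose j)"
    by (simp add: algebra_simps)
  hence "int (p^r) dvd int (Suc j) * (int (q + Suc j choose Suc j) - int (q + j choose j))"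
    unfolding q_def by (metis dvd_triv_left)
  hence d: "int p dvd (int (q + Suc j choose Suc j) - int (q + j choose j))"
    using keydvd[OF assms(1), of "Suc j" r] Suc.prems q_def by fastforce
  have ih: "int p dvd (int (q + j choose j) - 1)" using Suc q_def by simp
  have "int (q + Suc j choose Suc j) - 1 = (int (q + Suc j choose Suc j) - int (q + j choose j)) + (int (q + j choose j) - 1)"
    by simp
  also have "int p dvd \<dots>" using d ih by (rule dvd_add)
  finally show ?case unfolding q_def .
qed

lemma fermat_pow:
  fixes p a r :: nat
  assumes "prime p" "\<not> p dvd a"
  shows "[a ^ (p^r - 1) = 1] (mod p)"
proof (induction r)
  case 0
  then show ?case by simp
next
  case (Suc r)
  have p1: "p \<ge> 1" "p^r \<ge> 1" using assms(1) prime_gt_0_nat by (auto simp: Suc_leI)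
  have e: "p^Suc r - 1 = (p^r - 1) * p + (p - 1)"
  proof -
    have "int (p^Suc r - 1) = int ((p^r - 1) * p + (p - 1))"
      using p1 by (simp add: of_nat_diff algebra_simps)
    thus ?thesis by (simp only: of_nat_eq_iff)
  qed
  have "[a ^ (p^Suc r - 1) = (a^(p^r - 1))^p * a^(p-1)] (mod p)"
    unfolding e by (simp add: power_add power_mult)
  also have "[(a^(p^r - 1))^p * a^(p-1) = 1^p * 1] (mod p)"
    by (intro cong_mult cong_pow Suc fermat_theorem assms)
  finally show ?case by simp
qed

lemma finish:
  fixes p e :: nat and A D :: int and G :: rat
  assumes "G = of_int (int p ^ e) * (of_int A / of_int D)" "\<not> int p dvd D" "int p dvd (A - 3 * D)"
  shows "padic_cong G (3 * of_nat p ^ e) p (e + 1)"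
proof -
  obtain u where u: "A - 3 * D = int p * u" using assms(3) by blast
  have D0: "(of_int D :: rat) \<noteq> 0" using assms(2) by auto
  define pp where "pp = (of_nat p :: rat)"
  have Ar: "(of_int A :: rat) = pp * of_int u + 3 * of_int D"
  proof -
    have "A = int p * u + 3 * D" using u by simp
    hence "(of_int A :: rat) = of_int (int p * u + 3 * D)" by simp
    thus ?thesis unfolding pp_def by simp
  qed
  have "G - 3 * of_nat p ^ e = pp ^ e * (of_int A / of_int D) - 3 * pp ^ e"
    unfolding assms(1) pp_def by simp
  also have "\<dots> = pp ^ e * ((of_int A - 3 * of_int D) / of_int D)"
    using D0 by (simp add: diff_divide_distrib right_diff_distrib)
  also have "\<dots> = pp ^ e * (pp * of_int u / of_int D)" unfolding Ar by simp
  also have "\<dots> = of_int (int p ^ (e+1)) * (of_int u / of_int D)" unfolding pp_def by simp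
  finally show ?thesis unfolding padic_cong_def using assms(2) by blast
qed

lemma not_dvd_256:
  fixes p :: nat assumes "prime p" "odd p"
  shows "\<not> int p dvd 256 ^ n"
proof
  assume "int p dvd 256 ^ n"
  hence "int p dvd 256" using assms(1) prime_dvd_power by (metis prime_nat_int_transfer)
  hence "p dvd 256" by (metis of_nat_dvd_iff of_nat_numeral)
  hence "p dvd 2^8" by simp
  hence "p dvd 2" using assms(1) prime_dvd_power by blast
  hence "p \<le> 2" by (simp add: dvd_imp_le)
  moreover have "p \<ge> 2" using assms(1) prime_ge_2_nat by blast
  ultimately have "p = 2" by simp
  thus False using assms(2) by simp
qed

lemma fermat_int:
  fixes p :: nat and a :: int assumes "prime p" "odd p" and that: "a = 256 \<or> a = 16"
  shows "[a ^ (p^r - 1) = 1] (mod int p)"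
proof -
  have nd: "\<not> p dvd (nat a)"
  proof
    assume "p dvd nat a"
    hence "int p dvd (int (nat a))" by (metis of_nat_dvd_iff)
    hence "int p dvd a" using that by auto
    moreover have "a dvd 256" using that by auto
    ultimately have "int p dvd 256 ^ 1" using dvd_trans by simp
    thus False using not_dvd_256[OF assms(1,2)] by blast
  qed
  have "[nat a ^ (p^r - 1) = 1] (mod p)" by (rule fermat_pow[OF assms(1) nd])
  hence "[int (nat a ^ (p^r - 1)) = int 1] (mod int p)" using cong_int_iff by blast
  thus ?thesis using that by auto
qed

lemma case2:
  fixes p r :: nat
  assumes "prime p" "odd p" "r > 0"
  shows "padic_cong (\<Sum>k = 0..p ^ r - 1. term3 k) (3 * of_nat p ^ (4 * r)) p (4 * r + 1)"
proof -
  define q where "q = p^r"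
  have p2: "p \<ge> 2" using assms(1) prime_ge_2_nat by blast
  have q1: "q \<ge> 1" unfolding q_def using p2 by simp
  define b where "b = q + (q - 1) choose (q - 1)"
  define c2 where "c2 = 2 * (q - 1) choose (q - 1)"
  have bcong: "int p dvd int b - 1" unfolding b_def q_def by (rule binom_p1[OF assms(1)]) simp
  have rel: "(2*q - 1) * c2 = q * b"
  proof -
    obtain n where n: "q = Suc n" using q1 by (cases q) auto
    have c2n: "c2 = (2*n choose n)" unfolding c2_def n by simp
    have "Suc (2*n) * c2 = (Suc (2*n) choose Suc n) * Suc n"
      unfolding c2n by (rule Suc_times_binomial_eq)
    moreover have "(Suc (2*n) choose Suc n) = (Suc (2*n) choose (Suc (2*n) - Suc n))" by (rule binomial_symmetric) simp
    moreover have "Suc (2*n) - Suc n = n" by simp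
    moreover have "b = (Suc (2*n) choose n)" unfolding b_def n by (simp add: mult_2)
    moreover have "2 * q - 1 = Suc (2*n)" unfolding n by simp
    ultimately show ?thesis unfolding n by (simp only: mult.commute)
  qed
  define x where "x = (of_nat q :: rat)"
  define bb where "bb = (of_nat b :: rat)"
  have x1: "2*x - 1 \<noteq> 0"
  proof
    assume "2*x-1 = 0"
    hence "2 * x = 1" by simp
    hence "(of_nat (2*q) :: rat) = of_nat 1" unfolding x_def by simp
    hence "2*q = 1" by (simp only: of_nat_eq_iff)
    thus False by simp
  qed
  have c2r: "(of_nat c2 :: rat) = x * bb / (2*x - 1)"
  proof -
    have "(of_nat ((2*q - 1) * c2) :: rat) = of_nat (q * b)" using rel by simp
    hence "(2*x - 1) * of_nat c2 = x * bb" unfolding x_def bb_def using q1 by (simp add: of_nat_diff)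
    thus ?thesis using x1 by (simp add: field_simps)
  qed
  define A where "A = (8*int q^2 - 12*int q + 3) * int b ^ 4"
  define D where "D = (2*int q - 1)^4 * 256 ^ (q - 1)"
  have Ar: "(of_int A :: rat) = (8*x^2-12*x+3) * bb^4" unfolding A_def x_def bb_def by simp
  have Dr: "(of_int D :: rat) = (2*x-1)^4 * 256^(q-1)" unfolding D_def x_def by simp
  have Nr: "(of_nat (q - 1) :: rat) = x - 1" unfolding x_def using q1 by (simp add: of_nat_diff)
  have pr: "(of_int (int p ^ (4*r)) :: rat) = x^4" unfolding x_def q_def by (simp add: power_mult mult.commute)
  have poly: "8*(x-1)^2 + 4*(x-1) - 1 = 8*x^2-12*x+3" by (simp add: algebra_simps power2_eq_square)
  have G: "(\<Sum>k = 0..p ^ r - 1. term3 k) = of_int (int p ^ (4*r)) * (of_int A / of_int D)"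
  proof -
    have "(\<Sum>k = 0..p ^ r - 1. term3 k) = (8*x^2-12*x+3) * (x * bb / (2*x - 1))^4 / 256^(q-1)"
      unfolding sum_term3 q_def[symmetric] Nr c2_def[symmetric] c2r poly ..
    also have "\<dots> = x^4 * ((8*x^2-12*x+3) * bb^4 / ((2*x-1)^4 * 256^(q-1)))"
      by (simp add: power_divide power_mult_distrib)
    finally show ?thesis unfolding pr Ar Dr .
  qed
  define P where "P = int p"
  have P: "prime P" unfolding P_def using assms(1) by simp
  have Q0: "[int q = 0] (mod P)" unfolding q_def P_def cong_0_iff using assms(3)
    by (simp add: dvd_power)
  have b1: "[int b = 1] (mod P)" using bcong unfolding P_def by (simp add: cong_iff_dvd_diff)
  have f: "[(256::int) ^ (q - 1) = 1] (mod P)" unfolding P_def q_def using fermat_int[OF assms(1,2)] by simp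
  have "[A = (8*0^2 - 12*0 + 3) * 1^4] (mod P)" unfolding A_def
    by (intro cong_mult cong_add cong_diff cong_pow Q0 b1 cong_refl)
  hence cA: "[A = 3] (mod P)" by simp
  have "[D = (2*0-1)^4 * 1] (mod P)" unfolding D_def
    by (intro cong_mult cong_add cong_diff cong_pow Q0 f cong_refl)
  hence cD: "[D = 1] (mod P)" by simp
  have "[A - 3 * D = 3 - 3 * 1] (mod P)" by (intro cong_diff cong_mult cA cD cong_refl)
  hence d1: "P dvd A - 3 * D" by (simp add: cong_0_iff)
  have d2: "\<not> P dvd D"
  proof
    assume "P dvd D"
    hence "P dvd (2*int q - 1)^4 \<or> P dvd 256 ^ (q - 1)" unfolding D_def using P prime_dvd_mult_iff by blast
    moreover have "\<not> P dvd 256 ^ (q - 1)" unfolding P_def using not_dvd_256[OF assms(1,2)] .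
    ultimately have "P dvd 2*int q - 1" using P prime_dvd_power by blast
    moreover have "P dvd 2 * int q" using Q0 by (simp add: cong_0_iff)
    ultimately have "P dvd 2 * int q - (2*int q - 1)" using dvd_diff by blast
    hence "P dvd 1" by simp
    thus False using P not_prime_unit by blast
  qed
  show ?thesis by (rule finish[OF G d2[unfolded P_def] d1[unfolded P_def]])
qed

lemma arith4: "(T::rat)*(16*u*v/w)/(256*z) = u*(T*v/(16*w*z))"
  by (cases "w = 0"; cases "z = 0") (simp_all add: field_simps)

lemma case1:
  fixes p r :: nat
  assumes "prime p" "odd p" "r > 0"
  shows "padic_cong (\<Sum>k = 0..(p ^ r + 1) div 2. term3 k) (3 * of_nat p ^ (4 * r)) p (4 * r + 1)"
proof -
  define q where "q = p^r"
  have "p \<ge> 2" using assms(1) prime_ge_2_nat by blast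
  moreover have "p \<noteq> 2" using assms(2) by auto
  ultimately have p2: "p \<ge> 3" by simp
  have "p^1 \<le> p^r" by (rule power_increasing) (use p2 assms(3) in auto)
  hence q3: "q \<ge> 3" unfolding q_def using p2 by simp
  have oq: "odd q" unfolding q_def using assms(2) by simp
  define m where "m = q div 2"
  have qm: "q = 2*m+1" unfolding m_def using oq by simp
  have m1: "m \<ge> 1" using q3 qm by simp
  obtain k where k: "m = Suc k" using m1 by (cases m) auto
  have Nm: "(p^r + 1) div 2 = Suc m" unfolding q_def[symmetric] qm by simp
  define c where "c = (q - 1 choose (m - 1))"
  have cc: "c = (2*m choose k)" unfolding c_def qm k by simp
  define C1 where "C1 = (Suc (2*m) choose m)"
  have R1: "Suc m * (Suc (Suc (2*m)) choose Suc m) = Suc (Suc (2*m)) * C1"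
    unfolding C1_def by (rule Suc_times_binomial)
  have R2: "m * C1 = Suc (2*m) * c"
    unfolding C1_def cc k by (rule Suc_times_binomial)
  have CN: "(2 * Suc m choose Suc m) = 2 * C1"
  proof -
    have e: "Suc (Suc (2*m)) = Suc m * 2" by simp
    have "Suc m * (2 * Suc m choose Suc m) = Suc m * (2 * C1)"
      using R1 unfolding e by (simp only: mult.commute mult.left_commute)
    thus ?thesis by (simp only: mult_cancel_left nat.simps(3) simp_thms)
  qed
  have ccong: "int p dvd (int c - (-1)^(m-1))" unfolding c_def q_def
    by (rule binom_m1[OF assms(1)]) (use qm q_def in simp)
  define y where "y = (of_nat m :: rat)"
  define cr where "cr = (of_nat c :: rat)"
  have y0: "y \<noteq> 0" unfolding y_def using m1 by simp
  have C1r: "(of_nat C1 :: rat) = (2*y+1) * cr / y"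
  proof -
    have "(of_nat (m * C1) :: rat) = of_nat (Suc (2*m) * c)" using R2 by (simp only:)
    hence "y * of_nat C1 = (2*y+1) * cr" unfolding y_def cr_def by (simp add: algebra_simps)
    thus ?thesis using y0 by (simp add: field_simps)
  qed
  define A where "A = (2*(int q - 1)^2 + 10*(int q - 1) + 11) * int c ^ 4"
  define D where "D = (int q - 1)^4 * 256 ^ m"
  have xq: "(of_nat q :: rat) = 2*y+1" unfolding y_def qm by simp
  have Ar: "(of_int A :: rat) = (8*y^2+20*y+11) * cr^4"
  proof -
    have "(of_int A :: rat) = (2*(of_nat q - 1)^2 + 10*(of_nat q - 1) + 11) * cr^4"
      unfolding A_def cr_def by simp
    also have "\<dots> = (8*y^2+20*y+11) * cr^4" unfolding xq by (simp add: algebra_simps power2_eq_square)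
    finally show ?thesis .
  qed
  have Dr: "(of_int D :: rat) = 16 * y^4 * 256^m"
  proof -
    have "(of_int D :: rat) = (of_nat q - 1)^4 * 256^m" unfolding D_def by simp
    also have "\<dots> = 16 * y^4 * 256^m" unfolding xq by (simp add: power_mult_distrib)
    finally show ?thesis .
  qed
  have pr: "(of_int (int p ^ (4*r)) :: rat) = (2*y+1)^4"
    unfolding xq[symmetric] q_def by (simp add: power_mult mult.commute)
  have poly: "8*(y+1)^2 + 4*(y+1) - 1 = 8*y^2+20*y+11" by (simp add: algebra_simps power2_eq_square)
  have G: "(\<Sum>k = 0..(p ^ r + 1) div 2. term3 k) = of_int (int p ^ (4*r)) * (of_int A / of_int D)"
  proof -
    have e1: "(of_nat (Suc m) :: rat) = y + 1" unfolding y_def by simp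
    have "(\<Sum>k = 0..(p ^ r + 1) div 2. term3 k) = (8*y^2+20*y+11) * (2*((2*y+1) * cr / y))^4 / 256^(Suc m)"
      unfolding Nm sum_term3 e1 poly CN of_nat_mult C1r by simp
    also have "\<dots> = (8*y^2+20*y+11) * (16 * (2*y+1)^4 * cr^4 / y^4) / (256 * 256^m)"
      by (simp add: power_divide power_mult_distrib)
    also have "\<dots> = (2*y+1)^4 * ((8*y^2+20*y+11) * cr^4 / (16 * y^4 * 256^m))"
      by (rule arith4)
    finally show ?thesis unfolding pr Ar Dr .
  qed
  define P where "P = int p"
  have P: "prime P" unfolding P_def using assms(1) by simp
  have Q0: "[int q = 0] (mod P)" unfolding q_def P_def cong_0_iff using assms(3)
    by (simp add: dvd_power)
  have c1: "[int c = (-1)^(m-1)] (mod P)" using ccong unfolding P_def by (simp add: cong_iff_dvd_diff)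
  have "[int c ^ 4 = ((-1)^(m-1))^4] (mod P)" by (rule cong_pow[OF c1])
  hence c4: "[int c ^ 4 = 1] (mod P)" by (simp flip: power_mult add: power_mult[of "-1::int" 4] mult.commute)
  have f: "[(16::int) ^ (q - 1) = 1] (mod P)" unfolding P_def q_def using fermat_int[OF assms(1,2)] by simp
  have "(256::int) ^ m = 16 ^ (q - 1)" unfolding qm by (simp add: power_mult)
  hence f2: "[(256::int) ^ m = 1] (mod P)" using f by simp
  have "[A = (2*(0-1)^2 + 10*(0-1) + 11) * 1] (mod P)" unfolding A_def
    by (intro cong_mult cong_add cong_diff cong_pow Q0 c4 cong_refl)
  hence cA: "[A = 3] (mod P)" by simp
  have "[D = (0-1)^4 * 1] (mod P)" unfolding D_def
    by (intro cong_mult cong_add cong_diff cong_pow Q0 f2 cong_refl)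
  hence cD: "[D = 1] (mod P)" by simp
  have "[A - 3 * D = 3 - 3 * 1] (mod P)" by (intro cong_diff cong_mult cA cD cong_refl)
  hence d1: "P dvd A - 3 * D" by (simp add: cong_0_iff)
  have d2: "\<not> P dvd D"
  proof
    assume "P dvd D"
    hence "P dvd (int q - 1)^4 \<or> P dvd 256 ^ m" unfolding D_def using P prime_dvd_mult_iff by blast
    moreover have "\<not> P dvd 256 ^ m" unfolding P_def using not_dvd_256[OF assms(1,2)] .
    ultimately have "P dvd int q - 1" using P prime_dvd_power by blast
    moreover have "P dvd int q" using Q0 by (simp add: cong_0_iff)
    ultimately have "P dvd int q - (int q - 1)" using dvd_diff by blast
    hence "P dvd 1" by simp
    thus False using P not_prime_unit by blast
  qed
  show ?thesis by (rule finish[OF G d2[unfolded P_def] d1[unfolded P_def]])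
qed

theorem mainTheorem3:
  fixes p r :: nat
  assumes "prime p" and "odd p" and "r > 0"
  shows "padic_cong (\<Sum>k = 0..(p ^ r + 1) div 2. term3 k) (3 * of_nat p ^ (4 * r)) p (4 * r + 1)
       \<and> padic_cong (\<Sum>k = 0..p ^ r - 1. term3 k) (3 * of_nat p ^ (4 * r)) p (4 * r + 1)"
  using case1[OF assms] case2[OF assms] by (rule conjI)

end
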